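(* Let ${\bf p}\in M_n(k)$ be an AST-matrix of order $m$. Then the algebra $\mathcal O_{{\bf p},{\bf 1}}(S_{mn})$ is non-zero.
   Context: $k$ is a field of characteristic zero, $m,n\ge 2$ are integers, and $\xi\in k$ is a primitive $m$-th root of unity. For $i\in\{1,\dots,mn\}$ put $i^*=\lceil i/m\rceil\in\{1,\dots,n\}$. A matrix ${\bf p}=(p_{ij})\in M_n(k)$ is an AST-matrix if $p_{ii}=1$ and $p_{ij}p_{ji}=1$ for all $i,j$; it has order $m$ if $p_{ij}^m=1$ for all $i,j$; ${\bf 1}$ denotes the AST-matrix with all entries $1$. For $i,j,k,l\in\{1,\dots,mn\}$ put $R^{lk}_{ij}({\bf p})=\delta_{i^*k^*}\delta_{j^*l^*}\sum_{r,s=0}^{m-1}\xi^{r(i-k)+s(j-l)}p_{j^*i^*}^{rs}$. For AST-matrices ${\bf p},{\bf q}$ of order $m$, $\mathcal O_{{\bf q},{\bf p}}(S_{mn})$ is the universal algebra with generators $x_{ij}$, $1\le i,j\le mn$, and relations $x_{ij}x_{ik}=\delta_{jk}x_{ij}$, $x_{ji}x_{ki}=\delta_{jk}x_{ji}$, $\sum_{l=1}^{mn}x_{il}=1=\sum_{l=1}^{mn}x_{li}$ for $1\le i,j,k\le mn$, and $\sum_{k,l}R^{lk}_{ij}({\bf p})x_{\alpha l}x_{\beta k}=\sum_{k,l}R^{\alpha\beta}_{lk}({\bf q})x_{li}x_{kj}$ for $1\le i,j,\alpha,\beta\le mn$. *)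

theory Defs
  imports Complex_Main
begin

definition AST_matrix :: "nat \<Rightarrow> (nat \<Rightarrow> nat \<Rightarrow> 'k::field) \<Rightarrow> bool" where
  "AST_matrix n p \<longleftrightarrow> (\<forall>i\<in>{1..n}. p i i = 1) \<and> (\<forall>i\<in>{1..n}. \<forall>j\<in>{1..n}. p i j * p j i = 1)"

definition AST_order :: "nat \<Rightarrow> nat \<Rightarrow> (nat \<Rightarrow> nat \<Rightarrow> 'k::field) \<Rightarrow> bool" where
  "AST_order n m p \<longleftrightarrow> (\<forall>i\<in>{1..n}. \<forall>j\<in>{1..n}. p i j ^ m = 1)"

definition one_matrix :: "nat \<Rightarrow> nat \<Rightarrow> 'k::field" where
  "one_matrix i j = 1"

definition primitive_root :: "nat \<Rightarrow> 'k::field \<Rightarrow> bool" where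
  "primitive_root m \<xi> \<longleftrightarrow> \<xi> ^ m = 1 \<and> (\<forall>r. 0 < r \<and> r < m \<longrightarrow> \<xi> ^ r \<noteq> 1)"

definition star :: "nat \<Rightarrow> nat \<Rightarrow> nat" where
  "star m i = nat \<lceil>real i / real m\<rceil>"

text \<open>Rcoef m xi p i j k l is R^{lk}_{ij}(p)\<close>
definition Rcoef :: "nat \<Rightarrow> 'k::field \<Rightarrow> (nat \<Rightarrow> nat \<Rightarrow> 'k) \<Rightarrow> nat \<Rightarrow> nat \<Rightarrow> nat \<Rightarrow> nat \<Rightarrow> 'k" where
  "Rcoef m \<xi> p i j k l =
     (if star m i = star m k \<and> star m j = star m l then
        (\<Sum>r<m. \<Sum>s<m. \<xi> powi (int r * (int i - int k) + int s * (int j - int l))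
                          * p (star m j) (star m i) ^ (r * s))
      else 0)"

text \<open>An element is a finitely supported coefficient function on words in the
  generators; only finitely supported elements are ever produced below.\<close>

type_synonym 'k fa = "(nat \<times> nat) list \<Rightarrow> 'k"

definition fa_mon :: "(nat \<times> nat) list \<Rightarrow> 'k::field fa" where
  "fa_mon u = (\<lambda>w. if w = u then 1 else 0)"

definition fa_mult :: "'k::field fa \<Rightarrow> 'k fa \<Rightarrow> 'k fa" where
  "fa_mult f g = (\<lambda>w. \<Sum>t\<le>length w. f (take t w) * g (drop t w))"

definition fa_one :: "'k::field fa" where
  "fa_one = fa_mon []"

inductive_set fa_ideal :: "'k::field fa set \<Rightarrow> 'k fa set" for S where
  zero: "(\<lambda>w. 0) \<in> fa_ideal S"
| base: "r \<in> S \<Longrightarrow> r \<in> fa_ideal S"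
| add: "a \<in> fa_ideal S \<Longrightarrow> b \<in> fa_ideal S \<Longrightarrow> (\<lambda>w. a w + b w) \<in> fa_ideal S"
| smul: "a \<in> fa_ideal S \<Longrightarrow> (\<lambda>w. c * a w) \<in> fa_ideal S"
| lmul: "a \<in> fa_ideal S \<Longrightarrow> fa_mult (fa_mon u) a \<in> fa_ideal S"
| rmul: "a \<in> fa_ideal S \<Longrightarrow> fa_mult a (fa_mon u) \<in> fa_ideal S"

definition O_relations :: "nat \<Rightarrow> nat \<Rightarrow> 'k::field \<Rightarrow> (nat \<Rightarrow> nat \<Rightarrow> 'k) \<Rightarrow> (nat \<Rightarrow> nat \<Rightarrow> 'k) \<Rightarrow> 'k fa set" where
  "O_relations m n \<xi> q p =
    (let N = m * n in
     {(\<lambda>w. fa_mon [(i,j),(i,k)] w - (if j = k then fa_mon [(i,j)] w else 0)) | i j k.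
        i \<in> {1..N} \<and> j \<in> {1..N} \<and> k \<in> {1..N}}
   \<union> {(\<lambda>w. fa_mon [(j,i),(k,i)] w - (if j = k then fa_mon [(j,i)] w else 0)) | i j k.
        i \<in> {1..N} \<and> j \<in> {1..N} \<and> k \<in> {1..N}}
   \<union> {(\<lambda>w. (\<Sum>l\<in>{1..N}. fa_mon [(i,l)] w) - fa_one w) | i. i \<in> {1..N}}
   \<union> {(\<lambda>w. (\<Sum>l\<in>{1..N}. fa_mon [(l,i)] w) - fa_one w) | i. i \<in> {1..N}}
   \<union> {(\<lambda>w. (\<Sum>k\<in>{1..N}. \<Sum>l\<in>{1..N}. Rcoef m \<xi> p i j k l * fa_mon [(\<alpha>,l),(\<beta>,k)] w)
           - (\<Sum>k\<in>{1..N}. \<Sum>l\<in>{1..N}. Rcoef m \<xi> q l k \<beta> \<alpha> * fa_mon [(l,i),(k,j)] w)) | i j \<alpha> \<beta>.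
        i \<in> {1..N} \<and> j \<in> {1..N} \<and> \<alpha> \<in> {1..N} \<and> \<beta> \<in> {1..N}})"

definition O_nonzero :: "nat \<Rightarrow> nat \<Rightarrow> 'k::field \<Rightarrow> (nat \<Rightarrow> nat \<Rightarrow> 'k) \<Rightarrow> (nat \<Rightarrow> nat \<Rightarrow> 'k) \<Rightarrow> bool" where
  "O_nonzero m n \<xi> q p \<longleftrightarrow> fa_one \<notin> fa_ideal (O_relations m n \<xi> q p)"

end

theory Submission
  imports Defs
begin


lemma xi_nz: assumes "primitive_root m (xi::'k::field)" "m > 0" shows "xi \<noteq> 0"
  using assms unfolding primitive_root_def by (metis power_0_left zero_neq_one gr_implies_not0)

lemma xi_powi_mod:
  assumes "primitive_root m (xi::'k::field)" "m > 0"
  shows "xi powi c = xi ^ nat (c mod int m)"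
proof -
  have nz: "xi \<noteq> 0" using xi_nz assms by blast
  have "c = int m * (c div int m) + c mod int m" by simp
  then have "xi powi c = xi powi (int m * (c div int m)) * xi powi (c mod int m)"
    by (metis nz power_int_add)
  also have "xi powi (int m * (c div int m)) = 1"
    using assms unfolding primitive_root_def by (simp add: power_int_mult)
  also have "xi powi (c mod int m) = xi ^ nat (c mod int m)"
    using assms by (metis Euclidean_Rings.pos_mod_sign of_nat_0_less_iff power_int_of_nat nat_0_le)
  finally show ?thesis by simp
qed

lemma K1:
  assumes "primitive_root m (xi::'k::field_char_0)" "m > 0"
  shows "(\<Sum>r<m. xi powi (int r * c)) = (if int m dvd c then of_nat m else 0)"
proof -
  have nz: "xi \<noteq> 0" using xi_nz assms by blast
  define z where "z = xi powi c"
  have e: "xi powi (int r * c) = z ^ r" for r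
    unfolding z_def by (metis mult.commute power_int_mult power_int_of_nat)
  show ?thesis
  proof (cases "int m dvd c")
    case True
    then have "z = 1" unfolding z_def using xi_powi_mod[OF assms, of c] by simp
    then show ?thesis using True by (simp add: e)
  next
    case False
    have zm: "z ^ m = 1" unfolding z_def using assms unfolding primitive_root_def
      by (metis mult.commute power_int_mult power_int_of_nat power_int_1_left)
    have pos: "0 < nat (c mod int m)" "nat (c mod int m) < m"
    proof -
      have "c mod int m \<noteq> 0" using False by (simp add: dvd_eq_mod_eq_0)
      moreover have "0 \<le> c mod int m" "c mod int m < int m" using assms(2) by auto
      ultimately show "0 < nat (c mod int m)" "nat (c mod int m) < m" by auto
    qed
    then have "z \<noteq> 1" unfolding z_def using xi_powi_mod[OF assms, of c] assms(1)
      unfolding primitive_root_def by auto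
    then have "(\<Sum>r<m. z ^ r) = 0" using geometric_sum[of z m] zm by simp
    then show ?thesis using False by (simp add: e)
  qed
qed




definition lin :: "(('g \<Rightarrow> 'k::field) \<Rightarrow> ('g \<Rightarrow> 'k)) \<Rightarrow> bool" where
  "lin T \<longleftrightarrow> (\<forall>f h. T (\<lambda>g. f g + h g) = (\<lambda>g. T f g + T h g)) \<and> (\<forall>c f. T (\<lambda>g. c * f g) = (\<lambda>g. c * T f g))"

lemma lin_add: "lin T \<Longrightarrow> T (\<lambda>g. f g + h g) = (\<lambda>g. T f g + T h g)"
  unfolding lin_def by blast
lemma lin_scale: "lin T \<Longrightarrow> T (\<lambda>g. c * f g) = (\<lambda>g. c * T f g)"
  unfolding lin_def by blast
lemma lin_zero: "lin T \<Longrightarrow> T (\<lambda>g. 0) = (\<lambda>g. 0)"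
  using lin_scale[of T 0 "\<lambda>g. 0"] by simp
lemma lin_zero_app: "lin T \<Longrightarrow> T (\<lambda>g. 0) x = 0"
  using lin_zero by metis

lemma lin_sum: assumes "lin T" "finite A"
  shows "T (\<lambda>g. \<Sum>x\<in>A. F x g) = (\<lambda>g. \<Sum>x\<in>A. T (F x) g)"
  using assms(2)
proof (induction A rule: finite_induct)
  case empty then show ?case using lin_zero[OF assms(1)] by simp
next
  case (insert x A)
  have "T (\<lambda>g. \<Sum>y\<in>insert x A. F y g) = T (\<lambda>g. F x g + (\<Sum>y\<in>A. F y g))"
    using insert by simp
  also have "\<dots> = (\<lambda>g. T (F x) g + T (\<lambda>g. \<Sum>y\<in>A. F y g) g)"
    using lin_add[OF assms(1), of "F x" "\<lambda>g. \<Sum>y\<in>A. F y g"] by simp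
  also have "\<dots> = (\<lambda>g. \<Sum>y\<in>insert x A. T (F y) g)" using insert by simp
  finally show ?case .
qed

lemma lin_comb: assumes "lin T" "finite A"
  shows "T (\<lambda>g. \<Sum>x\<in>A. c x * F x g) = (\<lambda>g. \<Sum>x\<in>A. c x * T (F x) g)"
proof -
  have "T (\<lambda>g. \<Sum>x\<in>A. c x * F x g) = (\<lambda>g. \<Sum>x\<in>A. T (\<lambda>g. c x * F x g) g)"
    using lin_sum[OF assms, of "\<lambda>x g. c x * F x g"] by simp
  then show ?thesis using lin_scale[OF assms(1)] by simp
qed

lemma lin_comp: "lin S \<Longrightarrow> lin T \<Longrightarrow> lin (S \<circ> T)"
  unfolding lin_def by simp
lemma lin_id: "lin id" unfolding lin_def by simp
lemma lin_funpow: "lin T \<Longrightarrow> lin (T ^^ r)"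
  by (induction r) (auto simp: lin_id lin_comp)

fun Mw :: "(nat \<Rightarrow> nat \<Rightarrow> ('g \<Rightarrow> 'k) \<Rightarrow> ('g \<Rightarrow> 'k)) \<Rightarrow> (nat \<times> nat) list \<Rightarrow> ('g \<Rightarrow> 'k) \<Rightarrow> ('g \<Rightarrow> 'k)" where
  "Mw X [] = id"
| "Mw X (x # w) = X (fst x) (snd x) \<circ> Mw X w"

lemma Mw_append: "Mw X (u @ w) = Mw X u \<circ> Mw X w"
  by (induction u) auto

lemma Mw_lin: "(\<And>i j. lin (X i j)) \<Longrightarrow> lin (Mw X w)"
  by (induction w) (auto simp: lin_id lin_comp)

definition supp :: "'k::field fa \<Rightarrow> (nat \<times> nat) list set" where
  "supp a = {w. a w \<noteq> 0}"

definition Phi :: "(nat \<Rightarrow> nat \<Rightarrow> ('g \<Rightarrow> 'k) \<Rightarrow> ('g \<Rightarrow> 'k)) \<Rightarrow> 'k::field fa \<Rightarrow> ('g \<Rightarrow> 'k) \<Rightarrow> 'g \<Rightarrow> 'k" where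
  "Phi X a f g = (\<Sum>w\<in>supp a. a w * Mw X w f g)"

lemma Phi_superset: assumes "finite S" "supp a \<subseteq> S"
  shows "Phi X a f g = (\<Sum>w\<in>S. a w * Mw X w f g)"
  unfolding Phi_def
  by (rule sum.mono_neutral_left) (use assms in \<open>auto simp: supp_def\<close>)

abbreviation fs :: "'k::field fa \<Rightarrow> bool" where "fs a \<equiv> finite (supp a)"

lemma fs_mon[simp]: "fs (fa_mon u)"
proof -
  have "supp (fa_mon u) \<subseteq> {u}" by (auto simp: supp_def fa_mon_def)
  then show ?thesis using finite_subset by blast
qed

lemma fs_zero[simp]: "fs (\<lambda>w. 0)" by (simp add: supp_def)

lemma fs_add[simp]: "fs a \<Longrightarrow> fs b \<Longrightarrow> fs (\<lambda>w. a w + b w)"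
  by (rule finite_subset[of _ "supp a \<union> supp b"]) (auto simp: supp_def)
lemma fs_diff[simp]: "fs a \<Longrightarrow> fs b \<Longrightarrow> fs (\<lambda>w. a w - b w)"
  by (rule finite_subset[of _ "supp a \<union> supp b"]) (auto simp: supp_def)
lemma fs_scale[simp]: "fs a \<Longrightarrow> fs (\<lambda>w. c * a w)"
  by (rule finite_subset[of _ "supp a"]) (auto simp: supp_def)
lemma fs_if[simp]: "fs a \<Longrightarrow> fs (\<lambda>w. if P then a w else 0)"
  by (rule finite_subset[of _ "supp a"]) (auto simp: supp_def)
lemma fs_sum[simp]: "finite A \<Longrightarrow> (\<And>x. x \<in> A \<Longrightarrow> fs (F x)) \<Longrightarrow> fs (\<lambda>w. \<Sum>x\<in>A. F x w)"
  by (rule finite_subset[of _ "\<Union>x\<in>A. supp (F x)"]) (auto simp: supp_def intro: sum.neutral)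

lemma Phi_mon[simp]: "Phi X (fa_mon u) f g = Mw X u f g"
  by (subst Phi_superset[of "{u}"]) (auto simp: supp_def fa_mon_def)

lemma Phi_zero[simp]: "Phi X (\<lambda>w. 0) f g = 0"
  by (simp add: Phi_def supp_def)

lemma Phi_add[simp]: assumes "fs a" "fs b"
  shows "Phi X (\<lambda>w. a w + b w) f g = Phi X a f g + Phi X b f g"
proof -
  let ?S = "supp a \<union> supp b"
  have "Phi X (\<lambda>w. a w + b w) f g = (\<Sum>w\<in>?S. (a w + b w) * Mw X w f g)"
    by (rule Phi_superset) (use assms in \<open>auto simp: supp_def\<close>)
  also have "\<dots> = (\<Sum>w\<in>?S. a w * Mw X w f g) + (\<Sum>w\<in>?S. b w * Mw X w f g)"
    by (simp add: distrib_right sum.distrib)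
  also have "\<dots> = Phi X a f g + Phi X b f g"
    by (subst (1 2) Phi_superset[of ?S]) (use assms in auto)
  finally show ?thesis .
qed

lemma Phi_diff[simp]: assumes "fs a" "fs b"
  shows "Phi X (\<lambda>w. a w - b w) f g = Phi X a f g - Phi X b f g"
proof -
  let ?S = "supp a \<union> supp b"
  have "Phi X (\<lambda>w. a w - b w) f g = (\<Sum>w\<in>?S. (a w - b w) * Mw X w f g)"
    by (rule Phi_superset) (use assms in \<open>auto simp: supp_def\<close>)
  also have "\<dots> = (\<Sum>w\<in>?S. a w * Mw X w f g) - (\<Sum>w\<in>?S. b w * Mw X w f g)"
    by (simp add: left_diff_distrib sum_subtractf)
  also have "\<dots> = Phi X a f g - Phi X b f g"
    by (subst (1 2) Phi_superset[of ?S]) (use assms in auto)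
  finally show ?thesis .
qed

lemma Phi_scale[simp]: assumes "fs a"
  shows "Phi X (\<lambda>w. c * a w) f g = c * Phi X a f g"
proof -
  have "Phi X (\<lambda>w. c * a w) f g = (\<Sum>w\<in>supp a. (c * a w) * Mw X w f g)"
    by (rule Phi_superset) (use assms in \<open>auto simp: supp_def\<close>)
  then show ?thesis by (simp add: Phi_def sum_distrib_left mult.assoc)
qed

lemma Phi_if[simp]: assumes "fs a"
  shows "Phi X (\<lambda>w. if P then a w else 0) f g = (if P then Phi X a f g else 0)"
  by (cases P) auto

lemma Phi_sum[simp]: assumes "finite A" "\<And>x. x \<in> A \<Longrightarrow> fs (F x)"
  shows "Phi X (\<lambda>w. \<Sum>x\<in>A. F x w) f g = (\<Sum>x\<in>A. Phi X (F x) f g)"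
  using assms
proof (induction A rule: finite_induct)
  case empty then show ?case by simp
next
  case (insert x A)
  have "Phi X (\<lambda>w. \<Sum>y\<in>insert x A. F y w) f g = Phi X (\<lambda>w. F x w + (\<Sum>y\<in>A. F y w)) f g"
    using insert by simp
  also have "\<dots> = Phi X (F x) f g + Phi X (\<lambda>w. \<Sum>y\<in>A. F y w) f g"
    by (rule Phi_add) (use insert in auto)
  finally show ?case using insert by simp
qed

lemma take_eq_iff: assumes "t \<le> length w" shows "(take t w = u) \<longleftrightarrow> (t = length u \<and> take (length u) w = u)"
proof
  assume h: "take t w = u"
  then have "length u = t" using assms by auto
  then show "t = length u \<and> take (length u) w = u" using h by simp
qed auto
lemma drop_eq_iff: assumes "t \<le> length w" shows "(drop t w = u) \<longleftrightarrow> (t = length w - length u \<and> length u \<le> length w \<and> drop (length w - length u) w = u)"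
proof
  assume h: "drop t w = u"
  then have "length u = length w - t" by auto
  then show "t = length w - length u \<and> length u \<le> length w \<and> drop (length w - length u) w = u" using h assms by auto
qed auto

lemma fa_mult_mon_left:
  "fa_mult (fa_mon u) a = (\<lambda>w. if take (length u) w = u then a (drop (length u) w) else 0)"
proof
  fix w
  have "fa_mult (fa_mon u) a w = (\<Sum>t\<le>length w. (if t = length u then (if take (length u) w = u then a (drop t w) else 0) else 0))"
    unfolding fa_mult_def fa_mon_def
  proof (rule sum.cong[OF refl])
    fix t assume "t \<in> {..length w}"
    then have "t \<le> length w" by simp
    from take_eq_iff[OF this, of u] show "(if take t w = u then 1 else 0) * a (drop t w) = (if t = length u then (if take (length u) w = u then a (drop t w) else 0) else 0)"
      by simp
  qed
  also have "\<dots> = (if length u \<le> length w then (if take (length u) w = u then a (drop (length u) w) else 0) else 0)"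
    by (simp only: sum.delta finite_atMost atMost_iff)
  also have "\<dots> = (if take (length u) w = u then a (drop (length u) w) else 0)"
    by (cases "take (length u) w = u") (auto dest: arg_cong[where f=length])
  finally show "fa_mult (fa_mon u) a w = (if take (length u) w = u then a (drop (length u) w) else 0)" .
qed

lemma fa_mult_mon_right:
  "fa_mult a (fa_mon u) = (\<lambda>w. if length u \<le> length w \<and> drop (length w - length u) w = u then a (take (length w - length u) w) else 0)"
proof
  fix w
  let ?C = "length u \<le> length w \<and> drop (length w - length u) w = u"
  have "fa_mult a (fa_mon u) w = (\<Sum>t\<le>length w. (if t = length w - length u then (if ?C then a (take t w) else 0) else 0))"
    unfolding fa_mult_def fa_mon_def
  proof (rule sum.cong[OF refl])
    fix t assume "t \<in> {..length w}"
    then have "t \<le> length w" by simp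
    from drop_eq_iff[OF this, of u] show "a (take t w) * (if drop t w = u then 1 else 0) = (if t = length w - length u then (if ?C then a (take t w) else 0) else 0)"
      by auto
  qed
  also have "\<dots> = (if ?C then a (take (length w - length u) w) else 0)"
    by (simp only: sum.delta finite_atMost atMost_iff) simp
  finally show "fa_mult a (fa_mon u) w = (if ?C then a (take (length w - length u) w) else 0)" .
qed

lemma ideal_good:
  assumes linX: "\<And>i j. lin (X i j)"
    and rel: "\<And>r. r \<in> S \<Longrightarrow> fs r \<and> (\<forall>f g. Phi X r f g = 0)"
    and "a \<in> fa_ideal S"
  shows "fs a \<and> (\<forall>f g. Phi X a f g = 0)"
  using assms(3)
proof (induction a rule: fa_ideal.induct)
  case zero then show ?case by simp
next
  case (base r) then show ?case using rel by blast
next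
  case (add a b) then show ?case by simp
next
  case (smul a c) then show ?case by simp
next
  case (lmul a u)
  let ?b = "fa_mult (fa_mon u) a"
  have supp_eq: "supp ?b = (\<lambda>w. u @ w) ` supp a"
  proof (intro equalityI subsetI)
    fix w assume "w \<in> supp ?b"
    then have h: "take (length u) w = u" "a (drop (length u) w) \<noteq> 0"
      unfolding fa_mult_mon_left supp_def by (auto split: if_splits)
    have "w = u @ drop (length u) w" using append_take_drop_id[of "length u" w] h(1) by simp
    then show "w \<in> (\<lambda>w. u @ w) ` supp a" using h(2) unfolding supp_def by blast
  next
    fix w assume "w \<in> (\<lambda>w. u @ w) ` supp a"
    then show "w \<in> supp ?b" unfolding fa_mult_mon_left supp_def by auto
  qed
  have fin: "fs ?b" using lmul supp_eq by simp
  have "Phi X ?b f g = 0" for f g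
  proof -
    have "Phi X ?b f g = (\<Sum>w\<in>(\<lambda>w. u @ w) ` supp a. ?b w * Mw X w f g)"
      unfolding Phi_def supp_eq ..
    also have "\<dots> = (\<Sum>w\<in>supp a. a w * Mw X (u @ w) f g)"
      by (subst sum.reindex) (auto simp: fa_mult_mon_left inj_on_def)
    also have "\<dots> = (\<Sum>w\<in>supp a. a w * Mw X u (Mw X w f) g)"
      by (simp add: Mw_append)
    also have "\<dots> = Mw X u (\<lambda>g. \<Sum>w\<in>supp a. a w * Mw X w f g) g"
      using lin_comb[where T="Mw X u" and A="supp a" and c=a and F="\<lambda>w. Mw X w f", OF Mw_lin[of X, OF linX] lmul.IH[THEN conjunct1]] by simp
    also have "\<dots> = Mw X u (\<lambda>g. 0) g"
      using lmul.IH unfolding Phi_def by presburger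
    also have "\<dots> = 0" using lin_zero_app[OF Mw_lin[of X, OF linX]] by blast
    finally show ?thesis .
  qed
  then show ?case using fin by blast
next
  case (rmul a u)
  let ?b = "fa_mult a (fa_mon u)"
  have supp_eq: "supp ?b = (\<lambda>w. w @ u) ` supp a"
  proof (intro equalityI subsetI)
    fix w assume "w \<in> supp ?b"
    then have h: "length u \<le> length w" "drop (length w - length u) w = u" "a (take (length w - length u) w) \<noteq> 0"
      unfolding fa_mult_mon_right supp_def by (auto split: if_splits)
    have "w = take (length w - length u) w @ u" using append_take_drop_id[of "length w - length u" w] h(2) by simp
    then show "w \<in> (\<lambda>w. w @ u) ` supp a" using h(3) unfolding supp_def by blast
  next
    fix w assume "w \<in> (\<lambda>w. w @ u) ` supp a"
    then show "w \<in> supp ?b" unfolding fa_mult_mon_right supp_def by auto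
  qed
  have fin: "fs ?b" using rmul supp_eq by simp
  have "Phi X ?b f g = 0" for f g
  proof -
    have "Phi X ?b f g = (\<Sum>w\<in>(\<lambda>w. w @ u) ` supp a. ?b w * Mw X w f g)"
      unfolding Phi_def supp_eq ..
    also have "\<dots> = (\<Sum>w\<in>supp a. a w * Mw X (w @ u) f g)"
      by (subst sum.reindex) (auto simp: fa_mult_mon_right inj_on_def)
    also have "\<dots> = Phi X a (Mw X u f) g"
      by (simp add: Mw_append Phi_def)
    also have "\<dots> = 0" using rmul.IH by blast
    finally show ?thesis .
  qed
  then show ?case using fin by blast
qed

lemma one_not_in_ideal:
  assumes linX: "\<And>i j. lin (X i j)"
    and rel: "\<And>r. r \<in> S \<Longrightarrow> fs r \<and> (\<forall>f g. Phi X r f g = 0)"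
  shows "(fa_one :: 'k::field fa) \<notin> fa_ideal S"
proof
  assume "(fa_one :: 'k fa) \<in> fa_ideal S"
  from ideal_good[OF linX rel this]
  have "Phi X (fa_one :: 'k fa) (\<lambda>g. 1) undefined = 0" by blast
  then show False by (simp add: fa_one_def)
qed




lemma star_eq: assumes "m > 0" "i \<ge> 1" shows "star m i = (i - 1) div m + 1"
proof -
  define q where "q = (i - 1) div m"
  define r where "r = (i - 1) mod m"
  have i: "i = q * m + r + 1" "r < m" using assms by (auto simp: q_def r_def)
  have "\<lceil>real i / real m\<rceil> = int q + 1"
  proof (rule ceiling_unique)
    have "real q * real m < real i" using i by simp
    then show "real_of_int (int q + 1) - 1 < real i / real m" using assms by (simp add: field_simps)
    have "real i \<le> (real q + 1) * real m" using i by (simp add: algebra_simps)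
    then show "real i / real m \<le> real_of_int (int q + 1)" using assms by (simp add: field_simps)
  qed
  then show ?thesis unfolding star_def q_def by simp
qed

definition bs :: "nat \<Rightarrow> nat \<Rightarrow> nat" where "bs m I = (I - 1) * m + 1"

lemma star_bs: assumes "m > 0" "I \<ge> 1" "t < m" shows "star m (bs m I + t) = I"
proof -
  have "(bs m I + t - 1) div m = I - 1" using assms unfolding bs_def by simp
  then show ?thesis using star_eq[OF assms(1), of "bs m I + t"] assms unfolding bs_def by simp
qed

lemma decomp: assumes "m > 0" "l \<ge> 1" shows "l = bs m (star m l) + (l - 1) mod m"
  using star_eq[OF assms] assms unfolding bs_def
  by simp

lemma star_range: assumes "m > 0" "l \<in> {1..m*n}" shows "star m l \<in> {1..n}"
proof -
  have "(l - 1) div m < n" using assms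
    by (metis atLeastAtMost_iff diff_less less_le_trans less_mult_imp_div_less mult.commute not_one_le_zero zero_less_one le_eq_less_or_eq)
  then show ?thesis using star_eq[of m l] assms by auto
qed

lemma same_block: assumes "m > 0" "j \<ge> 1" "l \<ge> 1" "star m j = star m l" "int m dvd (int j - int l)"
  shows "j = l"
proof -
  have j: "j = bs m (star m l) + (j - 1) mod m" using decomp[OF assms(1,2)] assms(4) by simp
  have l: "l = bs m (star m l) + (l - 1) mod m" using decomp[OF assms(1,3)] by simp
  have "int j - int l = int ((j - 1) mod m) - int ((l - 1) mod m)" using j l by (metis of_nat_add add_diff_cancel_left)
  moreover have "int ((j - 1) mod m) < int m" "int ((l - 1) mod m) < int m" using assms(1) by auto
  ultimately have "int j - int l = 0" using assms(5)
    by (smt (verit, ccfv_threshold) dvd_imp_le_int minus_dvd_iff of_nat_0_le_iff)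
  then show ?thesis by simp
qed

lemma blk_set: assumes "m > 0" "I \<in> {1..n}"
  shows "{l \<in> {1..m*n}. star m l = I} = (\<lambda>t. bs m I + t) ` {..<m}"
proof (intro equalityI subsetI)
  fix l assume "l \<in> {l \<in> {1..m*n}. star m l = I}"
  then have "l \<ge> 1" "star m l = I" by auto
  then have "l = bs m I + (l - 1) mod m" using decomp[OF assms(1)] by metis
  moreover have "(l - 1) mod m < m" using assms(1) by simp
  ultimately show "l \<in> (\<lambda>t. bs m I + t) ` {..<m}" by blast
next
  fix l assume "l \<in> (\<lambda>t. bs m I + t) ` {..<m}"
  then obtain t where t: "t < m" "l = bs m I + t" by auto
  have "(I - 1) * m + t + 1 \<le> m * n"
  proof -
    have "(I - 1) * m + t + 1 \<le> (I - 1) * m + m" using t by simp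
    also have "\<dots> = I * m" using assms(2) by (cases I) auto
    also have "\<dots> \<le> n * m" using assms(2) by simp
    finally show ?thesis by (simp add: mult.commute)
  qed
  then show "l \<in> {l \<in> {1..m*n}. star m l = I}"
    using t star_bs[OF assms(1) _ t(1), of I] assms(2) unfolding bs_def by auto
qed

lemma blocksum: assumes "m > 0" "I \<in> {1..n}"
  shows "(\<Sum>l\<in>{1..m*n}. (if star m l = I then F l else 0)) = (\<Sum>t<m. F (bs m I + t))"
proof -
  have "(\<Sum>l\<in>{1..m*n}. (if star m l = I then F l else 0)) = sum F {l \<in> {1..m*n}. star m l = I}"
    by (rule sum.inter_filter[symmetric]) simp
  also have "\<dots> = sum F ((\<lambda>t. bs m I + t) ` {..<m})" using blk_set[OF assms] by simp
  also have "\<dots> = (\<Sum>t<m. F (bs m I + t))" by (subst sum.reindex) (auto simp: inj_on_def)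
  finally show ?thesis .
qed




locale qrep =
  fixes m n :: nat and xi :: "'k::field_char_0" and p :: "nat \<Rightarrow> nat \<Rightarrow> 'k"
    and U :: "nat \<Rightarrow> ('g \<Rightarrow> 'k) \<Rightarrow> ('g \<Rightarrow> 'k)"
  assumes m2: "m \<ge> 2" and prim: "primitive_root m xi"
    and U_lin: "a \<in> {1..n} \<Longrightarrow> lin (U a)"
    and U_m: "a \<in> {1..n} \<Longrightarrow> (U a ^^ m) f = f"
    and U_comm: "a \<in> {1..n} \<Longrightarrow> b \<in> {1..n} \<Longrightarrow> U a (U b f) = (\<lambda>g. p a b * U b (U a f) g)"
begin

lemma mpos: "m > 0" using m2 by simp
lemma xinz: "xi \<noteq> 0" using xi_nz[OF prim mpos] .
lemma pw_add: "xi powi (a + b) = xi powi a * xi powi b"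
  using power_int_add xinz by blast

lemma xi_mult_m: "xi powi (int m * k) = 1"
  using prim unfolding primitive_root_def by (simp add: power_int_mult)

lemma K1': "(\<Sum>r<m. xi powi (int r * c)) = (if int m dvd c then of_nat m else 0)"
  using K1[OF prim mpos] .

lemma K2: assumes "e = 1 \<or> e = -1"
  shows "(\<Sum>t<m. xi powi (c * (e * int t + d))) = (if int m dvd c then of_nat m else 0)"
proof -
  have "xi powi (c * (e * int t + d)) = xi powi (int t * (c * e)) * xi powi (c * d)" for t
    by (subst pw_add[symmetric]) (simp add: algebra_simps)
  then have "(\<Sum>t<m. xi powi (c * (e * int t + d))) = (\<Sum>t<m. xi powi (int t * (c * e))) * xi powi (c * d)"
    by (simp add: sum_distrib_right)
  also have "\<dots> = (if int m dvd (c * e) then of_nat m else 0) * xi powi (c * d)"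
    by (simp add: K1')
  also have "\<dots> = (if int m dvd c then of_nat m else 0)"
  proof (cases "int m dvd c")
    case True
    then obtain k where "c = int m * k" by blast
    then have "xi powi (c * d) = 1" using xi_mult_m[of "k * d"] by (simp add: mult.assoc)
    then show ?thesis using True by auto
  next
    case False
    then have "\<not> int m dvd (c * e)" using assms by auto
    then show ?thesis using False by simp
  qed
  finally show ?thesis .
qed

lemma delta_m: assumes "r < m"
  shows "(\<Sum>r'<m. (if int m dvd (int r - int r') then of_nat m else 0) * V r') = of_nat m * (V r :: 'k)"
proof -
  have "(\<Sum>r'<m. (if int m dvd (int r - int r') then of_nat m else 0) * V r') = (\<Sum>r'<m. if r' = r then of_nat m * V r' else 0)"
  proof (rule sum.cong[OF refl])
    fix r' assume "r' \<in> {..<m}"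
    then have "r' < m" by simp
    have "int m dvd (int r - int r') \<longleftrightarrow> r' = r"
    proof
      assume "int m dvd (int r - int r')"
      then obtain k where k: "int r - int r' = int m * k" by blast
      have "\<bar>int r - int r'\<bar> < int m" using \<open>r' < m\<close> assms by auto
      then have "int m * \<bar>k\<bar> < int m * 1" using k by (simp add: abs_mult)
      then have "\<bar>k\<bar> < 1" using mpos by (simp only: mult_less_cancel_left)
      then have "k = 0" by simp
      then show "r' = r" using k by simp
    qed simp
    then show "(if int m dvd (int r - int r') then of_nat m else 0) * V r' = (if r' = r then of_nat m * V r' else 0)"
      by simp
  qed
  also have "\<dots> = of_nat m * V r" using assms by (simp add: sum.delta)
  finally show ?thesis .
qed

lemma Upow_lin: "a \<in> {1..n} \<Longrightarrow> lin (U a ^^ r)"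
  using lin_funpow U_lin by blast

lemma Upow_comm1: assumes "a \<in> {1..n}" "b \<in> {1..n}"
  shows "U a ((U b ^^ r) f) = (\<lambda>g. p a b ^ r * (U b ^^ r) (U a f) g)"
proof (induction r)
  case 0 then show ?case by simp
next
  case (Suc r)
  have "U a ((U b ^^ Suc r) f) = U a (U b ((U b ^^ r) f))" by simp
  also have "\<dots> = (\<lambda>g. p a b * U b (U a ((U b ^^ r) f)) g)" using U_comm assms by blast
  also have "\<dots> = (\<lambda>g. p a b * U b (\<lambda>g. p a b ^ r * (U b ^^ r) (U a f) g) g)" using Suc by simp
  also have "\<dots> = (\<lambda>g. p a b ^ Suc r * (U b ^^ Suc r) (U a f) g)"
    using lin_scale[OF U_lin[OF assms(2)]] by (simp add: mult.assoc)
  finally show ?case .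
qed

lemma Upow_comm: assumes "a \<in> {1..n}" "b \<in> {1..n}"
  shows "(U a ^^ s) ((U b ^^ r) f) = (\<lambda>g. p a b ^ (r * s) * (U b ^^ r) ((U a ^^ s) f) g)"
proof (induction s)
  case 0 then show ?case by simp
next
  case (Suc s)
  have "(U a ^^ Suc s) ((U b ^^ r) f) = U a ((U a ^^ s) ((U b ^^ r) f))" by simp
  also have "\<dots> = U a (\<lambda>g. p a b ^ (r * s) * (U b ^^ r) ((U a ^^ s) f) g)" using Suc by simp
  also have "\<dots> = (\<lambda>g. p a b ^ (r * s) * U a ((U b ^^ r) ((U a ^^ s) f)) g)"
    using lin_scale[OF U_lin[OF assms(1)]] by simp
  also have "\<dots> = (\<lambda>g. p a b ^ (r * Suc s) * (U b ^^ r) ((U a ^^ Suc s) f) g)"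
    using Upow_comm1[OF assms] by (simp add: power_add mult_ac)
  finally show ?case .
qed

definition P :: "nat \<Rightarrow> int \<Rightarrow> ('g \<Rightarrow> 'k) \<Rightarrow> ('g \<Rightarrow> 'k)" where
  "P a d f = (\<lambda>g. (1 / of_nat m) * (\<Sum>r<m. xi powi (- (int r * d)) * (U a ^^ r) f g))"

lemma P_lin: assumes "a \<in> {1..n}" shows "lin (P a d)"
  unfolding lin_def P_def
proof (intro conjI allI)
  fix f h
  show "(\<lambda>g. 1 / of_nat m * (\<Sum>r<m. xi powi - (int r * d) * (U a ^^ r) (\<lambda>g. f g + h g) g)) =
        (\<lambda>g. 1 / of_nat m * (\<Sum>r<m. xi powi - (int r * d) * (U a ^^ r) f g) + 1 / of_nat m * (\<Sum>r<m. xi powi - (int r * d) * (U a ^^ r) h g))"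
    using lin_add[OF Upow_lin[OF assms]] by (simp add: sum.distrib distrib_left)
next
  fix c f
  show "(\<lambda>g. 1 / of_nat m * (\<Sum>r<m. xi powi - (int r * d) * (U a ^^ r) (\<lambda>g. c * f g) g)) =
        (\<lambda>g. c * (1 / of_nat m * (\<Sum>r<m. xi powi - (int r * d) * (U a ^^ r) f g)))"
    using lin_scale[OF Upow_lin[OF assms]] by (simp add: sum_distrib_left algebra_simps)
qed

lemma shift_sum: "H m = H 0 \<Longrightarrow> (\<Sum>r<m. H (Suc r)) = (\<Sum>r<m. (H r :: 'k))"
  using sum.lessThan_Suc_shift[of H m] sum.lessThan_Suc[of H m] by simp

lemma UP: assumes "a \<in> {1..n}" shows "U a (P a d f) = (\<lambda>g. xi powi d * P a d f g)"
proof
  fix g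
  define H where "H r = xi powi (- (int r * d)) * (U a ^^ r) f g" for r
  have Hm: "H m = H 0" unfolding H_def using U_m[OF assms] xi_mult_m[of "- d"] by simp
  have "U a (P a d f) g = (1 / of_nat m) * (\<Sum>r<m. xi powi (- (int r * d)) * U a ((U a ^^ r) f) g)"
    by (simp only: P_def lin_scale[OF U_lin[OF assms]] lin_comb[OF U_lin[OF assms] finite_lessThan] funpow.simps o_apply)
  also have "\<dots> = (1 / of_nat m) * (\<Sum>r<m. xi powi d * H (Suc r))"
  proof -
    have "xi powi (- (int r * d)) = xi powi d * xi powi (- (int (Suc r) * d))" for r
      by (subst pw_add[symmetric]) (simp add: algebra_simps)
    then show ?thesis unfolding H_def by (simp add: mult.assoc)
  qed
  also have "\<dots> = (1 / of_nat m) * (xi powi d * (\<Sum>r<m. H (Suc r)))" by (simp only: sum_distrib_left)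
  also have "\<dots> = xi powi d * ((1 / of_nat m) * (\<Sum>r<m. H r))" using shift_sum[OF Hm] by simp
  also have "\<dots> = xi powi d * P a d f g" unfolding P_def H_def by simp
  finally show "U a (P a d f) g = xi powi d * P a d f g" .
qed

lemma UpowP: assumes "a \<in> {1..n}" shows "(U a ^^ r) (P a d f) = (\<lambda>g. xi powi (int r * d) * P a d f g)"
proof (induction r)
  case 0 then show ?case by simp
next
  case (Suc r)
  have "(U a ^^ Suc r) (P a d f) = U a (\<lambda>g. xi powi (int r * d) * P a d f g)" using Suc by simp
  also have "\<dots> = (\<lambda>g. xi powi (int r * d) * (xi powi d * P a d f g))"
    using lin_scale[OF U_lin[OF assms]] UP[OF assms] by simp
  also have "\<dots> = (\<lambda>g. xi powi (int (Suc r) * d) * P a d f g)"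
  proof -
    have "xi powi (int (Suc r) * d) = xi powi d * xi powi (int r * d)"
      by (subst pw_add[symmetric]) (simp add: algebra_simps)
    then show ?thesis by (simp add: mult_ac)
  qed
  finally show ?case .
qed

lemma PP: assumes "a \<in> {1..n}"
  shows "P a d (P a e f) = (\<lambda>g. if int m dvd (e - d) then P a e f g else 0)"
proof
  fix g
  have "P a d (P a e f) g = (1 / of_nat m) * (\<Sum>r<m. xi powi (- (int r * d)) * (xi powi (int r * e) * P a e f g))"
    unfolding P_def[of a d] using UpowP[OF assms] by simp
  also have "\<dots> = (1 / of_nat m) * (\<Sum>r<m. xi powi (int r * (e - d))) * P a e f g"
  proof -
    have "xi powi (- (int r * d)) * (xi powi (int r * e) * Q) = xi powi (int r * (e - d)) * Q" for r Q
    proof -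
      have "xi powi (int r * (e - d)) = xi powi (- (int r * d)) * xi powi (int r * e)"
        by (subst pw_add[symmetric]) (simp add: algebra_simps)
      then show ?thesis by (simp add: mult.assoc)
    qed
    then have "(\<Sum>r<m. xi powi (- (int r * d)) * (xi powi (int r * e) * P a e f g)) = (\<Sum>r<m. xi powi (int r * (e - d)) * P a e f g)"
      by presburger
    then show ?thesis by (simp add: sum_distrib_right mult.assoc)
  qed
  also have "\<dots> = (if int m dvd (e - d) then P a e f g else 0)"
    using mpos by (simp add: K1')
  finally show "P a d (P a e f) g = (if int m dvd (e - d) then P a e f g else 0)" .
qed

lemma spectral: assumes "a \<in> {1..n}" "r < m" "e = 1 \<or> e = -1"
  shows "(\<Sum>t<m. xi powi (int r * (e * int t + d)) * P a (e * int t + d) f g) = (U a ^^ r) f g"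
proof -
  have "(\<Sum>t<m. xi powi (int r * (e * int t + d)) * P a (e * int t + d) f g)
     = (1 / of_nat m) * (\<Sum>t<m. \<Sum>r'<m. xi powi ((int r - int r') * (e * int t + d)) * (U a ^^ r') f g)"
    unfolding P_def
    by (simp add: sum_distrib_left pw_add[symmetric] algebra_simps)
  also have "\<dots> = (1 / of_nat m) * (\<Sum>r'<m. (\<Sum>t<m. xi powi ((int r - int r') * (e * int t + d))) * (U a ^^ r') f g)"
    by (subst sum.swap) (simp add: sum_distrib_right)
  also have "\<dots> = (1 / of_nat m) * (\<Sum>r'<m. (if int m dvd (int r - int r') then of_nat m else 0) * (U a ^^ r') f g)"
    using K2[OF assms(3)] by simp
  also have "\<dots> = (U a ^^ r) f g"
    using delta_m[OF assms(2)] mpos by simp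
  finally show ?thesis .
qed

lemma Psum: assumes "a \<in> {1..n}" "e = 1 \<or> e = -1"
  shows "(\<Sum>t<m. P a (e * int t + d) f g) = f g"
  using spectral[OF assms(1) mpos assms(2), of d f g] by simp

end



lemma swap3: "(\<Sum>x\<in>A. \<Sum>y\<in>B. \<Sum>z\<in>C. F x y z) = (\<Sum>y\<in>B. \<Sum>z\<in>C. \<Sum>x\<in>A. (F x y z :: 'a::comm_monoid_add))"
  by (rule trans[OF sum.swap]) (rule sum.cong[OF refl], rule sum.swap)

context qrep begin

lemma spectral1: assumes "a \<in> {1..n}" "r < m"
  shows "(\<Sum>t<m. xi powi (int r * (int t + d)) * P a (int t + d) f g) = (U a ^^ r) f g"
  using spectral[OF assms, of 1 d f g] by simp

lemma Psum1: assumes "a \<in> {1..n}" shows "(\<Sum>t<m. P a (int t + d) f g) = f g"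
  using Psum[OF assms, of 1 d f g] by simp

lemma Psum2: assumes "a \<in> {1..n}" shows "(\<Sum>t<m. P a (d - int t) f g) = f g"
  using Psum[OF assms, of "-1" d f g] by simp

definition X :: "nat \<Rightarrow> nat \<Rightarrow> ('g \<Rightarrow> 'k) \<Rightarrow> ('g \<Rightarrow> 'k)" where
  "X i j = (if i \<in> {1..m*n} \<and> j \<in> {1..m*n} \<and> star m i = star m j then P (star m i) (int i - int j) else (\<lambda>f g. 0))"

lemma X_lin: "lin (X i j)"
proof (cases "i \<in> {1..m*n} \<and> j \<in> {1..m*n} \<and> star m i = star m j")
  case True
  then have "star m i \<in> {1..n}" using star_range[OF mpos, of i n] by simp
  then show ?thesis unfolding X_def using P_lin True by simp
next
  case False
  then have "X i j = (\<lambda>f g. 0)" unfolding X_def by meson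
  then show ?thesis unfolding lin_def by simp
qed

lemma X_zero: "X i j (\<lambda>g. 0) g = 0"
  using lin_zero_app[OF X_lin] .

lemma X_off: "star m i \<noteq> star m j \<Longrightarrow> X i j f g = 0"
  unfolding X_def by simp

lemma X_on: "i \<in> {1..m*n} \<Longrightarrow> j \<in> {1..m*n} \<Longrightarrow> star m i = star m j \<Longrightarrow> X i j = P (star m i) (int i - int j)"
  unfolding X_def by simp

lemma R1: assumes "i \<in> {1..m*n}" "j \<in> {1..m*n}" "k \<in> {1..m*n}"
  shows "X i j (X i k f) g = (if j = k then X i j f g else 0)"
proof (cases "star m j = star m i")
  case False
  then show ?thesis using X_off by metis
next
  case Tj: True
  show ?thesis
  proof (cases "star m k = star m i")
    case False
    then have "j \<noteq> k" using Tj by auto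
    have "X i k f = (\<lambda>g. 0)" using X_off False by metis
    then show ?thesis using \<open>j \<noteq> k\<close> X_zero by simp
  next
    case True
    have I: "star m i \<in> {1..n}" using star_range[OF mpos assms(1)] .
    have "X i j (X i k f) g = (if int m dvd ((int i - int k) - (int i - int j)) then P (star m i) (int i - int k) f g else 0)"
      using X_on[OF assms(1,2)] X_on[OF assms(1,3)] Tj True PP[OF I] by simp
    also have "int m dvd ((int i - int k) - (int i - int j)) \<longleftrightarrow> j = k"
    proof
      assume "int m dvd ((int i - int k) - (int i - int j))"
      then have "int m dvd (int j - int k)" by simp
      then show "j = k" using same_block[OF mpos, of j k] Tj True assms by auto
    qed simp
    finally show ?thesis using X_on[OF assms(1,3)] True by auto
  qed
qed

lemma R2: assumes "i \<in> {1..m*n}" "j \<in> {1..m*n}" "k \<in> {1..m*n}"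
  shows "X j i (X k i f) g = (if j = k then X j i f g else 0)"
proof (cases "star m j = star m i")
  case False
  then show ?thesis using X_off by metis
next
  case Tj: True
  show ?thesis
  proof (cases "star m k = star m i")
    case False
    then have "j \<noteq> k" using Tj by auto
    have "X k i f = (\<lambda>g. 0)" using X_off False by metis
    then show ?thesis using \<open>j \<noteq> k\<close> X_zero by simp
  next
    case True
    have I: "star m i \<in> {1..n}" using star_range[OF mpos assms(1)] .
    have "X j i (X k i f) g = (if int m dvd ((int k - int i) - (int j - int i)) then P (star m i) (int k - int i) f g else 0)"
      using X_on[OF assms(2,1)] X_on[OF assms(3,1)] Tj True PP[OF I] by simp
    also have "int m dvd ((int k - int i) - (int j - int i)) \<longleftrightarrow> j = k"
    proof
      assume "int m dvd ((int k - int i) - (int j - int i))"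
      then have "int m dvd (int k - int j)" by simp
      then show "j = k" using same_block[OF mpos, of k j] Tj True assms by auto
    qed simp
    finally show ?thesis using X_on[OF assms(3,1)] True Tj by auto
  qed
qed

lemma R3: assumes "i \<in> {1..m*n}"
  shows "(\<Sum>l\<in>{1..m*n}. X i l f g) = f g"
proof -
  let ?I = "star m i"
  have I: "?I \<in> {1..n}" using star_range[OF mpos assms] .
  have "(\<Sum>l\<in>{1..m*n}. X i l f g) = (\<Sum>l\<in>{1..m*n}. (if star m l = ?I then P ?I (int i - int l) f g else 0))"
    by (rule sum.cong[OF refl]) (use assms X_on X_off in \<open>auto\<close>)
  also have "\<dots> = (\<Sum>t<m. P ?I (int i - int (bs m ?I + t)) f g)"
    by (rule blocksum[OF mpos I])
  also have "\<dots> = (\<Sum>t<m. P ?I ((int i - int (bs m ?I)) - int t) f g)"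
    by (simp add: algebra_simps)
  also have "\<dots> = f g" by (rule Psum2[OF I])
  finally show ?thesis .
qed

lemma R4: assumes "i \<in> {1..m*n}"
  shows "(\<Sum>l\<in>{1..m*n}. X l i f g) = f g"
proof -
  let ?I = "star m i"
  have I: "?I \<in> {1..n}" using star_range[OF mpos assms] .
  have "(\<Sum>l\<in>{1..m*n}. X l i f g) = (\<Sum>l\<in>{1..m*n}. (if star m l = ?I then P ?I (int l - int i) f g else 0))"
    by (rule sum.cong[OF refl]) (use assms X_on X_off in \<open>auto\<close>)
  also have "\<dots> = (\<Sum>t<m. P ?I (int (bs m ?I + t) - int i) f g)"
    by (rule blocksum[OF mpos I])
  also have "\<dots> = (\<Sum>t<m. P ?I (int t + (int (bs m ?I) - int i)) f g)"
    by (simp add: algebra_simps)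
  also have "\<dots> = f g" by (rule Psum1[OF I])
  finally show ?thesis .
qed

end



context qrep begin

lemma Rc1: assumes "i \<in> {1..m*n}" "j \<in> {1..m*n}" "k \<in> {1..m*n}" "l \<in> {1..m*n}"
  shows "Rcoef m xi one_matrix i j k l = (if k = i \<and> l = j then of_nat m * of_nat m else 0)"
proof (cases "star m i = star m k \<and> star m j = star m l")
  case False
  then have "\<not> (k = i \<and> l = j)" by auto
  then show ?thesis using False unfolding Rcoef_def by (simp only: if_False if_not_P)
next
  case True
  have "Rcoef m xi one_matrix i j k l = (\<Sum>r<m. \<Sum>s<m. xi powi (int r * (int i - int k)) * xi powi (int s * (int j - int l)))"
    unfolding Rcoef_def one_matrix_def using True
    by (simp only: simp_thms if_True power_one mult_1_right pw_add)
  also have "\<dots> = (\<Sum>r<m. xi powi (int r * (int i - int k))) * (\<Sum>s<m. xi powi (int s * (int j - int l)))"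
    by (simp add: sum_product)
  also have "\<dots> = (if int m dvd (int i - int k) then of_nat m else 0) * (if int m dvd (int j - int l) then of_nat m else 0)"
    by (simp add: K1')
  also have "(int m dvd (int i - int k)) \<longleftrightarrow> k = i"
    using same_block[OF mpos, of i k] True assms by auto
  also have "(int m dvd (int j - int l)) \<longleftrightarrow> l = j"
    using same_block[OF mpos, of j l] True assms by auto
  finally show ?thesis by simp
qed

lemma LHS5: assumes "i \<in> {1..m*n}" "j \<in> {1..m*n}" "\<alpha> \<in> {1..m*n}" "\<beta> \<in> {1..m*n}"
  shows "(\<Sum>k\<in>{1..m*n}. \<Sum>l\<in>{1..m*n}. Rcoef m xi one_matrix i j k l * X \<alpha> l (X \<beta> k f) g)
       = of_nat m * of_nat m * X \<alpha> j (X \<beta> i f) g"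
proof -
  have "(\<Sum>k\<in>{1..m*n}. \<Sum>l\<in>{1..m*n}. Rcoef m xi one_matrix i j k l * X \<alpha> l (X \<beta> k f) g)
      = (\<Sum>k\<in>{1..m*n}. if k = i then (\<Sum>l\<in>{1..m*n}. if l = j then of_nat m * of_nat m * X \<alpha> l (X \<beta> k f) g else 0) else 0)"
  proof (intro sum.cong refl)
    fix k assume k: "k \<in> {1..m*n}"
    show "(\<Sum>l\<in>{1..m*n}. Rcoef m xi one_matrix i j k l * X \<alpha> l (X \<beta> k f) g) = (if k = i then (\<Sum>l\<in>{1..m*n}. if l = j then of_nat m * of_nat m * X \<alpha> l (X \<beta> k f) g else 0) else 0)"
    proof (cases "k = i")
      case True
      have "(\<Sum>l\<in>{1..m*n}. Rcoef m xi one_matrix i j k l * X \<alpha> l (X \<beta> k f) g) = (\<Sum>l\<in>{1..m*n}. if l = j then of_nat m * of_nat m * X \<alpha> l (X \<beta> k f) g else 0)"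
      proof (rule sum.cong[OF refl])
        fix l assume l: "l \<in> {1..m*n}"
        show "Rcoef m xi one_matrix i j k l * X \<alpha> l (X \<beta> k f) g = (if l = j then of_nat m * of_nat m * X \<alpha> l (X \<beta> k f) g else 0)"
          using Rc1[OF assms(1,2) k l] True by simp
      qed
      then show ?thesis using True by (simp only: if_True simp_thms)
    next
      case False
      have "Rcoef m xi one_matrix i j k l = 0" if "l \<in> {1..m*n}" for l
        using Rc1[OF assms(1,2) k that] False by simp
      then show ?thesis using False by simp
    qed
  qed
  also have "\<dots> = (if i \<in> {1..m*n} then (if j \<in> {1..m*n} then of_nat m * of_nat m * X \<alpha> j (X \<beta> i f) g else 0) else 0)"
    by (simp only: sum.delta finite_atLeastAtMost)
  also have "\<dots> = of_nat m * of_nat m * X \<alpha> j (X \<beta> i f) g"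
    using assms by (simp only: if_True)
  finally show ?thesis .
qed


lemma term0: assumes "\<not> (star m \<alpha> = star m j \<and> star m \<beta> = star m i)"
  shows "Rcoef m xi p l k \<beta> \<alpha> * X l i (X k j f) g = 0"
proof (cases "star m l = star m \<beta> \<and> star m k = star m \<alpha>")
  case False
  have "Rcoef m xi p l k \<beta> \<alpha> = 0" unfolding Rcoef_def by (rule if_not_P[OF False])
  then show ?thesis by simp
next
  case True
  show ?thesis
  proof (cases "star m l = star m i")
    case False then show ?thesis using X_off by simp
  next
    case Tl: True
    then have "star m k \<noteq> star m j" using True assms by auto
    then have "X k j f = (\<lambda>g. 0)" using X_off by metis
    then show ?thesis using X_zero by simp
  qed
qed

lemma collapse: assumes "m > 0"
  shows "of_nat m * of_nat m * ((1 / of_nat m) * (\<Sum>s\<in>A. a s * ((1 / of_nat m) * (\<Sum>r\<in>B. b r s))))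
        = (\<Sum>s\<in>A. \<Sum>r\<in>B. a s * (b r s :: 'k))"
proof -
  have "of_nat m * of_nat m * ((1 / of_nat m) * (\<Sum>s\<in>A. a s * ((1 / of_nat m) * (\<Sum>r\<in>B. b r s))))
      = (of_nat m * of_nat m * (1 / of_nat m) * (1 / of_nat m)) * (\<Sum>s\<in>A. \<Sum>r\<in>B. a s * b r s)"
    by (simp add: sum_distrib_left mult_ac)
  also have "of_nat m * of_nat m * (1 / of_nat m) * (1 / of_nat m) = (1::'k)"
    using assms by simp
  finally show ?thesis by simp
qed

lemma R5: assumes ii: "i \<in> {1..m*n}" and jj: "j \<in> {1..m*n}" and aa: "\<alpha> \<in> {1..m*n}" and bb: "\<beta> \<in> {1..m*n}"
  shows "(\<Sum>k\<in>{1..m*n}. \<Sum>l\<in>{1..m*n}. Rcoef m xi one_matrix i j k l * X \<alpha> l (X \<beta> k f) g)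
       = (\<Sum>k\<in>{1..m*n}. \<Sum>l\<in>{1..m*n}. Rcoef m xi p l k \<beta> \<alpha> * X l i (X k j f) g)"
proof (cases "star m \<alpha> = star m j \<and> star m \<beta> = star m i")
  case False
  have "X \<alpha> j (X \<beta> i f) g = 0"
  proof (cases "star m \<alpha> = star m j")
    case True
    then have "star m \<beta> \<noteq> star m i" using False by simp
    then have "X \<beta> i f = (\<lambda>g. 0)" using X_off by metis
    then show ?thesis using X_zero by simp
  next
    case False then show ?thesis using X_off by simp
  qed
  moreover have "(\<Sum>k\<in>{1..m*n}. \<Sum>l\<in>{1..m*n}. Rcoef m xi p l k \<beta> \<alpha> * X l i (X k j f) g) = 0"
    by (intro sum.neutral ballI) (rule term0[OF False])
  ultimately show ?thesis using LHS5[OF assms] by simp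
next
  case cond: True
  define I where "I = star m i"
  define J where "J = star m j"
  have I: "I \<in> {1..n}" unfolding I_def using star_range[OF mpos ii] .
  have J: "J \<in> {1..n}" unfolding J_def using star_range[OF mpos jj] .
  define W where "W r s = (U I ^^ r) ((U J ^^ s) f) g" for r s
  define K where "K r s = xi powi (int r * (int i - int \<beta>)) * xi powi (int s * (int j - int \<alpha>)) * p J I ^ (r * s)" for r s
  define T where "T = (\<Sum>r<m. \<Sum>s<m. K r s * W r s)"
  define dI where "dI = int (bs m I) - int i"
  define dJ where "dJ = int (bs m J) - int j"
  define A where "A r t' = xi powi (int r * (int t' + dI))" for r t'
  define B where "B s t = xi powi (int s * (int t + dJ))" for s t
  define Y where "Y t t' = P I (int t' + dI) (P J (int t + dJ) f) g" for t t'
  have UJP: "(U J ^^ s) (P I (int \<beta> - int i) f) g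
      = (1 / of_nat m) * (\<Sum>r<m. xi powi (- (int r * (int \<beta> - int i))) * (p J I ^ (r * s) * W r s))" for s
    unfolding W_def
    by (simp only: P_def lin_scale[OF Upow_lin[OF J]] lin_comb[OF Upow_lin[OF J] finite_lessThan] Upow_comm[OF J I])
  have "(\<Sum>k\<in>{1..m*n}. \<Sum>l\<in>{1..m*n}. Rcoef m xi one_matrix i j k l * X \<alpha> l (X \<beta> k f) g)
      = of_nat m * of_nat m * P J (int \<alpha> - int j) (P I (int \<beta> - int i) f) g"
    using LHS5[OF assms] X_on[OF aa jj] X_on[OF bb ii] cond unfolding I_def J_def by simp
  also have "\<dots> = of_nat m * of_nat m * ((1 / of_nat m) * (\<Sum>s<m. xi powi (- (int s * (int \<alpha> - int j))) *
        ((1 / of_nat m) * (\<Sum>r<m. xi powi (- (int r * (int \<beta> - int i))) * (p J I ^ (r * s) * W r s)))))"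
    unfolding P_def[of J] UJP ..
  also have "\<dots> = (\<Sum>s<m. \<Sum>r<m. xi powi (- (int s * (int \<alpha> - int j))) * (xi powi (- (int r * (int \<beta> - int i))) * (p J I ^ (r * s) * W r s)))"
    by (rule collapse[OF mpos])
  also have "\<dots> = (\<Sum>r<m. \<Sum>s<m. xi powi (- (int s * (int \<alpha> - int j))) * (xi powi (- (int r * (int \<beta> - int i))) * (p J I ^ (r * s) * W r s)))"
    by (rule sum.swap)
  also have "\<dots> = T"
    unfolding T_def K_def
  proof (intro sum.cong refl)
    fix r s
    have e1: "- (int s * (int \<alpha> - int j)) = int s * (int j - int \<alpha>)" by (simp add: algebra_simps)
    have e2: "- (int r * (int \<beta> - int i)) = int r * (int i - int \<beta>)" by (simp add: algebra_simps)
    show "xi powi (- (int s * (int \<alpha> - int j))) * (xi powi (- (int r * (int \<beta> - int i))) * (p J I ^ (r * s) * W r s))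
        = xi powi (int r * (int i - int \<beta>)) * xi powi (int s * (int j - int \<alpha>)) * p J I ^ (r * s) * W r s"
      unfolding e1 e2 by (simp add: mult_ac)
  qed
  finally have LHS: "(\<Sum>k\<in>{1..m*n}. \<Sum>l\<in>{1..m*n}. Rcoef m xi one_matrix i j k l * X \<alpha> l (X \<beta> k f) g) = T" .
  define C where "C k l = (\<Sum>r<m. \<Sum>s<m. xi powi (int r * (int l - int \<beta>) + int s * (int k - int \<alpha>)) * p J I ^ (r * s))" for k l
  define G where "G k l = C k l * P I (int l - int i) (P J (int k - int j) f) g" for k l
  have trm: "Rcoef m xi p l k \<beta> \<alpha> * X l i (X k j f) g = (if star m k = J then (if star m l = I then G k l else 0) else 0)"
    if k: "k \<in> {1..m*n}" and l: "l \<in> {1..m*n}" for k l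
  proof (cases "star m k = J")
    case False
    then have "X k j f = (\<lambda>g. 0)" using X_off unfolding J_def by metis
    then show ?thesis using X_zero False by simp
  next
    case Tk: True
    show ?thesis
    proof (cases "star m l = I")
      case False
      then show ?thesis using X_off Tk unfolding I_def by simp
    next
      case Tl: True
      have "Rcoef m xi p l k \<beta> \<alpha> = C k l"
        unfolding Rcoef_def C_def using Tk Tl cond unfolding I_def J_def by simp
      moreover have "X l i = P I (int l - int i)" using X_on[OF l ii] Tl unfolding I_def by simp
      moreover have "X k j = P J (int k - int j)" using X_on[OF k jj] Tk unfolding J_def by simp
      ultimately show ?thesis using Tk Tl unfolding G_def by simp
    qed
  qed
  have "(\<Sum>k\<in>{1..m*n}. \<Sum>l\<in>{1..m*n}. Rcoef m xi p l k \<beta> \<alpha> * X l i (X k j f) g)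
      = (\<Sum>k\<in>{1..m*n}. if star m k = J then (\<Sum>l\<in>{1..m*n}. if star m l = I then G k l else 0) else 0)"
  proof (intro sum.cong refl)
    fix k assume k: "k \<in> {1..m*n}"
    have "(\<Sum>l\<in>{1..m*n}. Rcoef m xi p l k \<beta> \<alpha> * X l i (X k j f) g)
        = (\<Sum>l\<in>{1..m*n}. if star m k = J then (if star m l = I then G k l else 0) else 0)"
      using trm[OF k] by (intro sum.cong refl) simp
    then show "(\<Sum>l\<in>{1..m*n}. Rcoef m xi p l k \<beta> \<alpha> * X l i (X k j f) g)
        = (if star m k = J then (\<Sum>l\<in>{1..m*n}. if star m l = I then G k l else 0) else 0)"
      by (cases "star m k = J") simp_all
  qed
  also have "\<dots> = (\<Sum>k\<in>{1..m*n}. if star m k = J then (\<Sum>t'<m. G k (bs m I + t')) else 0)"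
    by (simp only: blocksum[OF mpos I])
  also have "\<dots> = (\<Sum>t<m. \<Sum>t'<m. G (bs m J + t) (bs m I + t'))"
    by (simp only: blocksum[OF mpos J])
  also have "\<dots> = (\<Sum>t<m. \<Sum>t'<m. \<Sum>r<m. \<Sum>s<m. K r s * (A r t' * (B s t * Y t t')))"
  proof (intro sum.cong refl)
    fix t t'
    have l: "int (bs m I + t') - int i = int t' + dI" unfolding dI_def by simp
    have k: "int (bs m J + t) - int j = int t + dJ" unfolding dJ_def by simp
    have ex: "xi powi (int r * (int (bs m I + t') - int \<beta>) + int s * (int (bs m J + t) - int \<alpha>))
        = xi powi (int r * (int i - int \<beta>)) * xi powi (int s * (int j - int \<alpha>)) * A r t' * B s t" for r s
    proof -
      have "int r * (int (bs m I + t') - int \<beta>) + int s * (int (bs m J + t) - int \<alpha>)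
          = int r * (int i - int \<beta>) + int s * (int j - int \<alpha>) + int r * (int t' + dI) + int s * (int t + dJ)"
        using l k by (simp add: algebra_simps)
      then show ?thesis unfolding A_def B_def by (simp only: pw_add)
    qed
    show "G (bs m J + t) (bs m I + t') = (\<Sum>r<m. \<Sum>s<m. K r s * (A r t' * (B s t * Y t t')))"
      unfolding G_def C_def Y_def K_def l k ex
      by (simp add: sum_distrib_right sum_distrib_left mult_ac)
  qed
  also have "\<dots> = T"
  proof -
    have W: "W r s = (\<Sum>t'<m. \<Sum>t<m. A r t' * (B s t * Y t t'))" if r: "r < m" and s: "s < m" for r s
    proof -
      have Us: "(U J ^^ s) f = (\<lambda>g. \<Sum>t<m. B s t * P J (int t + dJ) f g)"
        using spectral1[OF J s] unfolding B_def by (intro ext) simp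
      have "W r s = (\<Sum>t'<m. A r t' * P I (int t' + dI) ((U J ^^ s) f) g)"
        unfolding W_def A_def using spectral1[OF I r] by simp
      also have "\<dots> = (\<Sum>t'<m. A r t' * (\<Sum>t<m. B s t * Y t t'))"
        unfolding Us Y_def by (simp only: lin_comb[OF P_lin[OF I] finite_lessThan])
      finally show ?thesis by (simp add: sum_distrib_left)
    qed
    have "T = (\<Sum>r<m. \<Sum>s<m. \<Sum>t'<m. \<Sum>t<m. K r s * (A r t' * (B s t * Y t t')))"
      unfolding T_def using W by (simp add: sum_distrib_left)
    also have "\<dots> = (\<Sum>r<m. \<Sum>t'<m. \<Sum>t<m. \<Sum>s<m. K r s * (A r t' * (B s t * Y t t')))"
      by (rule sum.cong[OF refl], rule swap3)
    also have "\<dots> = (\<Sum>t'<m. \<Sum>t<m. \<Sum>r<m. \<Sum>s<m. K r s * (A r t' * (B s t * Y t t')))"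
      by (rule swap3)
    also have "\<dots> = (\<Sum>t<m. \<Sum>t'<m. \<Sum>r<m. \<Sum>s<m. K r s * (A r t' * (B s t * Y t t')))"
      by (rule sum.swap)
    finally show ?thesis by simp
  qed
  finally show ?thesis using LHS by simp
qed

end



context qrep begin

lemma Mw1: "Mw X [(a, b)] f g = X a b f g" by simp
lemma Mw2: "Mw X [(a, b), (c, d)] f g = X a b (X c d f) g" by simp

theorem main: "O_nonzero m n xi p one_matrix"
  unfolding O_nonzero_def
proof (rule one_not_in_ideal[OF X_lin])
  fix r assume "r \<in> O_relations m n xi p one_matrix"
  then have "r \<in> {(\<lambda>w. fa_mon [(i,j),(i,k)] w - (if j = k then fa_mon [(i,j)] w else 0)) | i j k.
        i \<in> {1..m*n} \<and> j \<in> {1..m*n} \<and> k \<in> {1..m*n}}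
   \<or> r \<in> {(\<lambda>w. fa_mon [(j,i),(k,i)] w - (if j = k then fa_mon [(j,i)] w else 0)) | i j k.
        i \<in> {1..m*n} \<and> j \<in> {1..m*n} \<and> k \<in> {1..m*n}}
   \<or> r \<in> {(\<lambda>w. (\<Sum>l\<in>{1..m*n}. fa_mon [(i,l)] w) - fa_one w) | i. i \<in> {1..m*n}}
   \<or> r \<in> {(\<lambda>w. (\<Sum>l\<in>{1..m*n}. fa_mon [(l,i)] w) - fa_one w) | i. i \<in> {1..m*n}}
   \<or> r \<in> {(\<lambda>w. (\<Sum>k\<in>{1..m*n}. \<Sum>l\<in>{1..m*n}. Rcoef m xi one_matrix i j k l * fa_mon [(\<alpha>,l),(\<beta>,k)] w)
           - (\<Sum>k\<in>{1..m*n}. \<Sum>l\<in>{1..m*n}. Rcoef m xi p l k \<beta> \<alpha> * fa_mon [(l,i),(k,j)] w)) | i j \<alpha> \<beta>.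
        i \<in> {1..m*n} \<and> j \<in> {1..m*n} \<and> \<alpha> \<in> {1..m*n} \<and> \<beta> \<in> {1..m*n}}"
    by (simp only: O_relations_def Let_def Un_iff disj_assoc)
  then show "fs r \<and> (\<forall>f g. Phi X r f g = 0)"
  proof (elim disjE)
    assume "r \<in> {(\<lambda>w. fa_mon [(i,j),(i,k)] w - (if j = k then fa_mon [(i,j)] w else 0)) | i j k.
        i \<in> {1..m*n} \<and> j \<in> {1..m*n} \<and> k \<in> {1..m*n}}"
    then obtain i j k where a: "i \<in> {1..m*n}" "j \<in> {1..m*n}" "k \<in> {1..m*n}"
        "r = (\<lambda>w. fa_mon [(i,j),(i,k)] w - (if j = k then fa_mon [(i,j)] w else 0))" by blast
    have "Phi X r f g = 0" for f g
      unfolding a(4) using R1[OF a(1-3), of f g] by (simp del: Mw.simps add: Mw1 Mw2)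
    then show ?thesis using a(4) by simp
  next
    assume "r \<in> {(\<lambda>w. fa_mon [(j,i),(k,i)] w - (if j = k then fa_mon [(j,i)] w else 0)) | i j k.
        i \<in> {1..m*n} \<and> j \<in> {1..m*n} \<and> k \<in> {1..m*n}}"
    then obtain i j k where b: "i \<in> {1..m*n}" "j \<in> {1..m*n}" "k \<in> {1..m*n}"
        "r = (\<lambda>w. fa_mon [(j,i),(k,i)] w - (if j = k then fa_mon [(j,i)] w else 0))" by blast
    have "Phi X r f g = 0" for f g
      unfolding b(4) using R2[OF b(1-3), of f g] by (simp del: Mw.simps add: Mw1 Mw2)
    then show ?thesis using b(4) by simp
  next
    assume "r \<in> {(\<lambda>w. (\<Sum>l\<in>{1..m*n}. fa_mon [(i,l)] w) - fa_one w) | i. i \<in> {1..m*n}}"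
    then obtain i where c: "i \<in> {1..m*n}" "r = (\<lambda>w. (\<Sum>l\<in>{1..m*n}. fa_mon [(i,l)] w) - fa_one w)" by blast
    have "Phi X r f g = 0" for f g
      unfolding c(2) fa_one_def using R3[OF c(1), of f g] by (simp del: Mw.simps add: Mw1 Mw.simps(1))
    then show ?thesis using c(2) by (simp add: fa_one_def)
  next
    assume "r \<in> {(\<lambda>w. (\<Sum>l\<in>{1..m*n}. fa_mon [(l,i)] w) - fa_one w) | i. i \<in> {1..m*n}}"
    then obtain i where d: "i \<in> {1..m*n}" "r = (\<lambda>w. (\<Sum>l\<in>{1..m*n}. fa_mon [(l,i)] w) - fa_one w)" by blast
    have "Phi X r f g = 0" for f g
      unfolding d(2) fa_one_def using R4[OF d(1), of f g] by (simp del: Mw.simps add: Mw1 Mw.simps(1))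
    then show ?thesis using d(2) by (simp add: fa_one_def)
  next
    assume "r \<in> {(\<lambda>w. (\<Sum>k\<in>{1..m*n}. \<Sum>l\<in>{1..m*n}. Rcoef m xi one_matrix i j k l * fa_mon [(\<alpha>,l),(\<beta>,k)] w)
           - (\<Sum>k\<in>{1..m*n}. \<Sum>l\<in>{1..m*n}. Rcoef m xi p l k \<beta> \<alpha> * fa_mon [(l,i),(k,j)] w)) | i j \<alpha> \<beta>.
        i \<in> {1..m*n} \<and> j \<in> {1..m*n} \<and> \<alpha> \<in> {1..m*n} \<and> \<beta> \<in> {1..m*n}}"
    then obtain i j \<alpha> \<beta> where e: "i \<in> {1..m*n}" "j \<in> {1..m*n}" "\<alpha> \<in> {1..m*n}" "\<beta> \<in> {1..m*n}"
        "r = (\<lambda>w. (\<Sum>k\<in>{1..m*n}. \<Sum>l\<in>{1..m*n}. Rcoef m xi one_matrix i j k l * fa_mon [(\<alpha>,l),(\<beta>,k)] w)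
           - (\<Sum>k\<in>{1..m*n}. \<Sum>l\<in>{1..m*n}. Rcoef m xi p l k \<beta> \<alpha> * fa_mon [(l,i),(k,j)] w))" by blast
    have "Phi X r f g = 0" for f g
      unfolding e(5) using R5[OF e(1-4), of f g] by (simp del: Mw.simps add: Mw2)
    then show ?thesis using e(5) by simp
  qed
qed

end



definition sig :: "nat \<Rightarrow> nat \<Rightarrow> nat" where
  "sig m x = (if x mod m = m - 1 then x - (m - 1) else x + 1)"

lemma sig_mod: assumes "m > 0" shows "sig m x mod m = (x + 1) mod m"
proof (cases "x mod m = m - 1")
  case True
  have x: "x = m * (x div m) + (m - 1)" using True by (metis div_mult_mod_eq mult.commute)
  then have "sig m x = m * (x div m)" unfolding sig_def using True by simp
  moreover have "x + 1 = m * (x div m + 1)" using x assms by (simp add: algebra_simps)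
  ultimately show ?thesis by simp
next
  case False
  have "x mod m < m" using assms by simp
  then have "x mod m + 1 < m" using False by linarith
  then have "(x + 1) mod m = x mod m + 1" by (simp add: mod_Suc)
  then show ?thesis unfolding sig_def using False by (simp add: mod_Suc) 
qed

lemma sig_iter: assumes "m > 0" shows "(sig m ^^ t) x = m * (x div m) + (x mod m + t) mod m"
proof (induction t)
  case 0 then show ?case by simp
next
  case (Suc t)
  define q where "q = (x mod m + t) mod m"
  have q: "q < m" using assms unfolding q_def by simp
  have y: "(sig m ^^ t) x = m * (x div m) + q" using Suc unfolding q_def by simp
  have ymod: "(m * (x div m) + q) mod m = q" using q by simp
  show ?case
  proof (cases "q = m - 1")
    case True
    have "(x mod m + Suc t) mod m = 0"
    proof -
      have "(x mod m + Suc t) mod m = (q + 1) mod m" unfolding q_def by (simp add: mod_Suc)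
      also have "\<dots> = 0" using True assms by simp
      finally show ?thesis .
    qed
    moreover have "sig m (m * (x div m) + q) = m * (x div m)" unfolding sig_def using ymod True by simp
    ultimately show ?thesis using y by simp
  next
    case False
    have "(x mod m + Suc t) mod m = q + 1"
    proof -
      have "(x mod m + Suc t) mod m = (q + 1) mod m" unfolding q_def by (simp add: mod_Suc)
      also have "\<dots> = q + 1" using False q by simp
      finally show ?thesis .
    qed
    moreover have "sig m (m * (x div m) + q) = m * (x div m) + q + 1" unfolding sig_def using ymod False by simp
    ultimately show ?thesis using y by simp
  qed
qed

lemma sig_m: assumes "m > 0" shows "(sig m ^^ m) x = x"
  using sig_iter[OF assms, of m x] by simp

lemma pow_mod: assumes "(q::'k::comm_monoid_mult) ^ m = 1" shows "q ^ y = q ^ (y mod m)"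
proof -
  have "q ^ y = q ^ (m * (y div m) + y mod m)" by simp
  also have "\<dots> = (q ^ m) ^ (y div m) * q ^ (y mod m)" by (simp only: power_add power_mult)
  finally show ?thesis using assms by simp
qed

lemma pow_sig: assumes "m > 0" "(q::'k::comm_monoid_mult) ^ m = 1" shows "q ^ sig m x = q * q ^ x"
proof -
  have "q ^ sig m x = q ^ (sig m x mod m)" using pow_mod[OF assms(2)] by blast
  also have "\<dots> = q ^ ((x + 1) mod m)" using sig_mod[OF assms(1)] by simp
  also have "\<dots> = q ^ (x + 1)" using pow_mod[OF assms(2)] by metis
  finally show ?thesis by simp
qed

definition sh :: "nat \<Rightarrow> nat \<Rightarrow> (nat \<Rightarrow> nat) \<Rightarrow> (nat \<Rightarrow> nat)" where
  "sh m a g = g(a := sig m (g a))"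

definition cc :: "(nat \<Rightarrow> nat \<Rightarrow> 'k::field) \<Rightarrow> nat \<Rightarrow> (nat \<Rightarrow> nat) \<Rightarrow> 'k" where
  "cc p a g = (\<Prod>b\<in>{1..<a}. p b a ^ (g b))"

definition UU :: "nat \<Rightarrow> (nat \<Rightarrow> nat \<Rightarrow> 'k::field) \<Rightarrow> nat \<Rightarrow> ((nat \<Rightarrow> nat) \<Rightarrow> 'k) \<Rightarrow> ((nat \<Rightarrow> nat) \<Rightarrow> 'k)" where
  "UU m p a f = (\<lambda>g. cc p a g * f (sh m a g))"

lemma sh_iter: "(sh m a ^^ r) g = g(a := (sig m ^^ r) (g a))"
  by (induction r) (auto simp: sh_def)

lemma cc_other: assumes "\<not> (1 \<le> a \<and> a < b)" shows "cc p b (g(a := y)) = cc p b g"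
  unfolding cc_def using assms by (intro prod.cong refl) auto

lemma cc_same: "cc p a (g(a := y)) = cc p a g"
  by (rule cc_other) simp

lemma cc_shift: assumes "m > 0" "1 \<le> a" "a < b" "p a b ^ m = 1"
  shows "cc p b (sh m a g) = p a b * cc p b g"
proof -
  have a: "a \<in> {1..<b}" using assms by simp
  have "cc p b (sh m a g) = (\<Prod>x\<in>{1..<b}. p x b ^ (sh m a g) x)" unfolding cc_def ..
  also have "\<dots> = p a b ^ (sh m a g) a * (\<Prod>x\<in>{1..<b} - {a}. p x b ^ (sh m a g) x)"
    by (rule prod.remove[OF finite_atLeastLessThan a])
  also have "(sh m a g) a = sig m (g a)" by (simp add: sh_def)
  also have "(\<Prod>x\<in>{1..<b} - {a}. p x b ^ (sh m a g) x) = (\<Prod>x\<in>{1..<b} - {a}. p x b ^ g x)"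
    by (intro prod.cong refl) (auto simp: sh_def)
  also have "p a b ^ sig m (g a) = p a b * p a b ^ g a" using pow_sig[OF assms(1,4)] .
  finally show ?thesis
    unfolding cc_def using prod.remove[OF _ a, of "\<lambda>x. p x b ^ g x"] by (simp add: mult.assoc)
qed

lemma cc_sh: "cc p a (sh m a g) = cc p a g"
  unfolding sh_def by (rule cc_same)

lemma UU_pow: "(UU m p a ^^ r) f = (\<lambda>g. cc p a g ^ r * f ((sh m a ^^ r) g))"
proof (induction r)
  case 0 then show ?case by simp
next
  case (Suc r)
  show ?case
  proof (rule ext)
    fix g
    have "(UU m p a ^^ Suc r) f g = cc p a g * (cc p a (sh m a g) ^ r * f ((sh m a ^^ r) (sh m a g)))"
      by (simp only: funpow.simps(2) o_apply Suc UU_def)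
    also have "\<dots> = cc p a g ^ Suc r * f ((sh m a ^^ Suc r) g)"
      by (simp only: cc_sh funpow_Suc_right o_apply power_Suc mult.assoc)
    finally show "(UU m p a ^^ Suc r) f g = cc p a g ^ Suc r * f ((sh m a ^^ Suc r) g)" .
  qed
qed


lemma sh_comm: "a \<noteq> b \<Longrightarrow> sh m b (sh m a g) = sh m a (sh m b g)"
  unfolding sh_def by (auto simp: fun_upd_twist)

theorem lemma2p3:
  fixes p :: "nat \<Rightarrow> nat \<Rightarrow> 'k::field_char_0" and \<xi> :: 'k and m n :: nat
  assumes "m \<ge> 2" and "n \<ge> 2"
    and "primitive_root m \<xi>"
    and "AST_matrix n p" and "AST_order n m p"
  shows "O_nonzero m n \<xi> p one_matrix"
proof -
  have mpos: "m > 0" using assms(1) by simp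
  have pm: "p a b ^ m = 1" if "a \<in> {1..n}" "b \<in> {1..n}" for a b
    using assms(5) that unfolding AST_order_def by blast
  have paa: "p a a = 1" if "a \<in> {1..n}" for a
    using assms(4) that unfolding AST_matrix_def by blast
  have pab: "p a b * p b a = 1" if "a \<in> {1..n}" "b \<in> {1..n}" for a b
    using assms(4) that unfolding AST_matrix_def by blast
  interpret qrep m n \<xi> p "UU m p"
  proof (unfold_locales)
    show "2 \<le> m" by (rule assms(1))
    show "primitive_root m \<xi>" by (rule assms(3))
  next
    fix a assume a: "a \<in> {1..n}"
    show "lin (UU m p a)" unfolding lin_def UU_def by (simp add: distrib_left mult_ac)
  next
    fix a :: nat and f :: "(nat \<Rightarrow> nat) \<Rightarrow> 'k" assume a: "a \<in> {1..n}"
    have "cc p a g ^ m = 1" for g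
    proof -
      have "cc p a g ^ m = (\<Prod>b\<in>{1..<a}. (p b a ^ m) ^ (g b))"
      proof -
        have e: "(x ^ k) ^ m = (x ^ m) ^ k" for x :: 'k and k
          by (metis power_mult mult.commute)
        show ?thesis unfolding cc_def prod_power_distrib e ..
      qed
      also have "\<dots> = 1" using pm a by (intro prod.neutral) auto
      finally show ?thesis .
    qed
    then show "(UU m p a ^^ m) f = f"
      unfolding UU_pow sh_iter sig_m[OF mpos] by simp
  next
    fix a b :: nat and f :: "(nat \<Rightarrow> nat) \<Rightarrow> 'k" assume a: "a \<in> {1..n}" and b: "b \<in> {1..n}"
    show "UU m p a (UU m p b f) = (\<lambda>g. p a b * UU m p b (UU m p a f) g)"
    proof (rule ext)
      fix g
      have L: "UU m p a (UU m p b f) g = cc p a g * (cc p b (sh m a g) * f (sh m b (sh m a g)))"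
        unfolding UU_def ..
      have R: "UU m p b (UU m p a f) g = cc p b g * (cc p a (sh m b g) * f (sh m a (sh m b g)))"
        unfolding UU_def ..
      show "UU m p a (UU m p b f) g = p a b * UU m p b (UU m p a f) g"
      proof (cases "a = b")
        case True
        then show ?thesis using L R paa[OF a] by simp
      next
        case False
        note shc = sh_comm[OF False, of m g]
        show ?thesis
        proof (cases "a < b")
          case True
          have c1: "cc p b (sh m a g) = p a b * cc p b g"
          proof -
            have "1 \<le> a" using a by simp
            from cc_shift[of m a b p g, OF mpos this True pm[OF a b]] show ?thesis .
          qed
          have c2: "cc p a (sh m b g) = cc p a g"
            unfolding sh_def using True by (intro cc_other) simp
          show ?thesis using L R c1 c2 shc by (simp add: mult_ac)
        next
          case False2: False
          then have lt: "b < a" using False by simp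
          have c1: "cc p b (sh m a g) = cc p b g"
            unfolding sh_def using lt by (intro cc_other) simp
          have c2: "cc p a (sh m b g) = p b a * cc p a g"
          proof -
            have "1 \<le> b" using b by simp
            from cc_shift[of m b a p g, OF mpos this lt pm[OF b a]] show ?thesis .
          qed
          have "UU m p a (UU m p b f) g = (p a b * p b a) * (cc p a g * (cc p b g * f (sh m b (sh m a g))))"
            using L c1 pab[OF a b] by simp
          then show ?thesis using R c2 shc by (simp add: mult_ac)
        qed
      qed
    qed
  qed
  show ?thesis by (rule main)
qed


end
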